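(* There exist an increasing function $g:\mathbb{N}\setminus\{0\}\to\mathbb{N}\setminus\{0\}$ and, for each $i\in\mathbb{N}\setminus\{0\}$, a regular $g(i)$-sided polygon $P^i\subseteq\mathbb{R}^2$ such that $S=\bigcup_{i=1}^\infty\big(P^i+i\,\mathbf e(1)\big)$ is a rational MICP representable set and the sets $P^i+i\,\mathbf e(1)$, $i\ge1$, are pairwise disjoint.
   Context: $\mathbf e(1)=(1,0)\in\mathbb{R}^2$. A set $S\subseteq\mathbb{R}^n$ is MICP representable if there is a closed convex $M\subseteq\mathbb{R}^{n+p+d}$ (variables $(\mathbf x,\mathbf y,\mathbf z)$) such that $\mathbf x\in S$ iff there exist $\mathbf y\in\mathbb{R}^p$, $\mathbf z\in\mathbb{Z}^d$ with $(\mathbf x,\mathbf y,\mathbf z)\in M$. It is rational MICP representable if such an $M$ exists with $\operatorname{proj}_{\mathbf z}(M)$ rationally unbounded, where $I\subseteq\mathbb{R}^d$ is rationally unbounded if for every image $I'\subseteq\mathbb{R}^{d'}$ of $I$ under a rational affine map, either $I'$ is bounded or its recession cone $I'_\infty=\{\mathbf r:\ \mathbf x+\lambda\mathbf r\in I'\ \forall\mathbf x\in I',\lambda\ge0\}$ contains a nonzero integer vector. *)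

theory Defs
  imports "HOL-Analysis.Analysis"
begin

text \<open>Points of R^m are encoded as functions nat => real vanishing from index m on.
  The type nat => real carries the product topology (Function_Topology); on the
  closed subspace vec m this is the Euclidean topology of R^m.\<close>

definition vec :: "nat \<Rightarrow> (nat \<Rightarrow> real) set" where
  "vec m = {x. \<forall>i\<ge>m. x i = 0}"

definition convex_set :: "(nat \<Rightarrow> real) set \<Rightarrow> bool" where
  "convex_set M \<longleftrightarrow> (\<forall>x\<in>M. \<forall>y\<in>M. \<forall>u::real. 0 \<le> u \<and> u \<le> 1 \<longrightarrow>
      (\<lambda>i. u * x i + (1 - u) * y i) \<in> M)"

definition join :: "nat \<Rightarrow> nat \<Rightarrow> (nat \<Rightarrow> real) \<Rightarrow> (nat \<Rightarrow> real) \<Rightarrow> (nat \<Rightarrow> real) \<Rightarrow> (nat \<Rightarrow> real)" where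
  "join n p x y z = (\<lambda>i. if i < n then x i else if i < n + p then y (i - n) else z (i - n - p))"

definition proj_z :: "nat \<Rightarrow> nat \<Rightarrow> nat \<Rightarrow> (nat \<Rightarrow> real) set \<Rightarrow> (nat \<Rightarrow> real) set" where
  "proj_z n p d M = (\<lambda>w. \<lambda>i. if i < d then w (n + p + i) else 0) ` M"

definition bounded_set :: "(nat \<Rightarrow> real) set \<Rightarrow> bool" where
  "bounded_set I \<longleftrightarrow> (\<exists>B. \<forall>x\<in>I. \<forall>i. \<bar>x i\<bar> \<le> B)"

definition rec_cone :: "nat \<Rightarrow> (nat \<Rightarrow> real) set \<Rightarrow> (nat \<Rightarrow> real) set" where
  "rec_cone m I = {r \<in> vec m. \<forall>x\<in>I. \<forall>t::real. t \<ge> 0 \<longrightarrow> (\<lambda>i. x i + t * r i) \<in> I}"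

definition aff_map :: "nat \<Rightarrow> nat \<Rightarrow> (nat \<Rightarrow> nat \<Rightarrow> real) \<Rightarrow> (nat \<Rightarrow> real) \<Rightarrow> (nat \<Rightarrow> real) \<Rightarrow> (nat \<Rightarrow> real)" where
  "aff_map d d' A b x = (\<lambda>i. if i < d' then (\<Sum>j<d. A i j * x j) + b i else 0)"

definition rationally_unbounded :: "nat \<Rightarrow> (nat \<Rightarrow> real) set \<Rightarrow> bool" where
  "rationally_unbounded d I \<longleftrightarrow>
     (\<forall>d' A b. (\<forall>i j. A i j \<in> \<rat>) \<and> (\<forall>i. b i \<in> \<rat>) \<longrightarrow>
        (let I' = aff_map d d' A b ` I in
          bounded_set I' \<or> (\<exists>r\<in>rec_cone d' I'. (\<exists>i. r i \<noteq> 0) \<and> (\<forall>i. r i \<in> \<int>))))"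

definition MICP_repr_by :: "nat \<Rightarrow> nat \<Rightarrow> nat \<Rightarrow> (nat \<Rightarrow> real) set \<Rightarrow> (nat \<Rightarrow> real) set \<Rightarrow> bool" where
  "MICP_repr_by n p d M S \<longleftrightarrow>
     M \<subseteq> vec (n + p + d) \<and> closed M \<and> convex_set M \<and>
     (\<forall>x\<in>vec n. x \<in> S \<longleftrightarrow>
        (\<exists>y\<in>vec p. \<exists>z\<in>vec d. (\<forall>i<d. z i \<in> \<int>) \<and> join n p x y z \<in> M))"

definition MICP_representable :: "nat \<Rightarrow> (nat \<Rightarrow> real) set \<Rightarrow> bool" where
  "MICP_representable n S \<longleftrightarrow> S \<subseteq> vec n \<and> (\<exists>p d M. MICP_repr_by n p d M S)"

definition rational_MICP_representable :: "nat \<Rightarrow> (nat \<Rightarrow> real) set \<Rightarrow> bool" where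
  "rational_MICP_representable n S \<longleftrightarrow> S \<subseteq> vec n \<and>
     (\<exists>p d M. MICP_repr_by n p d M S \<and> rationally_unbounded d (proj_z n p d M))"

definition pt2 :: "real \<Rightarrow> real \<Rightarrow> (nat \<Rightarrow> real)" where
  "pt2 a c = (\<lambda>j. if j = 0 then a else if j = 1 then c else 0)"

definition e1 :: "nat \<Rightarrow> real" where
  "e1 = pt2 1 0"

definition regular_polygon :: "nat \<Rightarrow> (nat \<Rightarrow> real) set \<Rightarrow> bool" where
  "regular_polygon k P \<longleftrightarrow> k \<ge> 3 \<and>
     (\<exists>c1 c2 \<rho> \<theta>. \<rho> > 0 \<and>
        (let v = (\<lambda>l. pt2 (c1 + \<rho> * cos (\<theta> + 2 * pi * real l / real k))
                          (c2 + \<rho> * sin (\<theta> + 2 * pi * real l / real k)))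
         in P = {(\<lambda>j. \<Sum>l<k. w l * v l j) | w. (\<forall>l<k. w l \<ge> 0) \<and> (\<Sum>l<k. w l) = 1}))"

definition translate :: "(nat \<Rightarrow> real) \<Rightarrow> (nat \<Rightarrow> real) set \<Rightarrow> (nat \<Rightarrow> real) set" where
  "translate t P = (\<lambda>x. \<lambda>j. x j + t j) ` P"

end

theory Submission
  imports Defs
begin


lemma one_minus_cos_le: "1 - cos (x::real) \<le> x\<^sup>2 / 2"
proof -
  have "cos x = cos (2 * (x/2))" by simp
  also have "\<dots> = 1 - 2 * sin (x/2) ^ 2" by (rule cos_double_sin)
  finally have e: "cos x = 1 - 2 * sin (x/2) ^ 2" .
  have "\<bar>sin (x/2)\<bar> \<le> \<bar>x/2\<bar>" by (rule abs_sin_x_le_abs_x)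
  then have "\<bar>sin (x/2)\<bar>^2 \<le> \<bar>x/2\<bar>^2" by (rule power_mono) simp
  then have "sin (x/2) ^ 2 \<le> (x/2)^2" by (simp only: power2_abs)
  then show ?thesis using e by (simp add: power_divide)
qed

lemma cc_bound:
  assumes "j \<ge> (1::nat)"
  shows "1 - cos (pi / real (2^(j+2))) \<le> 1 / 2^(j+2)"
proof -
  let ?N = "(2::real)^(j+2)"
  have N8: "?N \<ge> 8"
  proof -
    have "(2::real)^3 \<le> 2^(j+2)" by (rule power_increasing) (use assms in auto)
    then show ?thesis by simp
  qed
  have "pi^2 \<le> (4::real)^2" using pi_less_4 pi_gt_zero by (intro power_mono) auto
  then have pi2: "pi^2 \<le> 16" by simp
  have "1 - cos (pi / ?N) \<le> (pi/?N)^2/2" by (rule one_minus_cos_le)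
  also have "\<dots> = pi^2 / (2 * ?N * ?N)" by (simp add: power2_eq_square)
  also have "\<dots> \<le> 16 / (2 * ?N * ?N)" using pi2 N8 by (intro divide_right_mono) auto
  also have "\<dots> \<le> 1 / ?N" using N8 by (simp add: field_simps)
  finally show ?thesis by simp
qed

lemma cos_odd_le:
  assumes "k \<ge> (1::nat)" and "odd n"
  shows "cos (real_of_int n * pi / real k) \<le> cos (pi / real k)"
proof -
  define n' where "n' = n mod (2 * int k)"
  define q where "q = n div (2 * int k)"
  have nq: "n = n' + 2 * int k * q" unfolding n'_def q_def by simp
  have n'b: "0 \<le> n'" "n' < 2 * int k" using assms unfolding n'_def by auto
  have "odd n'" using assms(2) nq by auto
  then have n'1: "n' \<ge> 1" using n'b by (cases "n' = 0") auto
  have "odd (2 * int k - n')" using \<open>odd n'\<close> by auto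
  then have n'2: "n' \<le> 2 * int k - 1" using n'b by (cases "n' = 2 * int k") auto
  have "real_of_int n * pi / real k = real_of_int n' * pi / real k + 2 * pi * real_of_int q"
    using assms(1) by (simp add: nq field_simps)
  then have "cos (real_of_int n * pi / real k) = cos (real_of_int n' * pi / real k)"
    using cos_int_2pin[of q] sin_int_2pin[of q] by (simp only: cos_add mult_1_right mult_zero_right diff_zero)
  also have "\<dots> \<le> cos (pi / real k)"
  proof (cases "n' \<le> int k")
    case True
    show ?thesis
    proof (rule cos_monotone_0_pi_le)
      show "0 \<le> pi / real k" by simp
      show "pi / real k \<le> real_of_int n' * pi / real k"
        using n'1 assms(1) by (simp add: divide_right_mono)
      have "real_of_int n' \<le> real k" using True by simp
      then show "real_of_int n' * pi / real k \<le> pi" using assms(1)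
        by (simp add: field_simps mult_right_mono)
    qed
  next
    case False
    have "real_of_int n' * pi / real k = 2 * pi - real_of_int (2 * int k - n') * pi / real k"
      using assms(1) by (simp add: field_simps)
    then have "cos (real_of_int n' * pi / real k) = cos (real_of_int (2 * int k - n') * pi / real k)"
      by simp
    also have "\<dots> \<le> cos (pi / real k)"
    proof (rule cos_monotone_0_pi_le)
      show "0 \<le> pi / real k" by simp
      have "1 \<le> real_of_int (2 * int k - n')" using n'2 by linarith
      then show "pi / real k \<le> real_of_int (2 * int k - n') * pi / real k"
        using assms(1) by (simp add: divide_right_mono)
      have "real_of_int (2 * int k - n') \<le> real k" using False by simp
      then show "real_of_int (2 * int k - n') * pi / real k \<le> pi" using assms(1)
        by (simp add: field_simps mult_right_mono)
    qed
    finally show ?thesis .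
  qed
  finally show ?thesis .
qed



lemma wsum:
  fixes f :: "nat \<Rightarrow> real"
  assumes "m < k" "m' < k" "0 < k" "h < k"
  shows "(\<Sum>l<k. ((if l=m then a else 0) + (if l=m' then b else 0) + (if l=0 then e else 0)
            + (if l=h then e else 0)) * f l) = a*f m + b*f m' + e*f 0 + e * f h"
  using assms by (simp add: distrib_right sum.distrib if_distrib[of "\<lambda>x. x * f _"] cong: if_cong)

lemma sector:
  fixes k h :: nat and r u0 u1 :: real
  assumes kh: "k = 2*h" and h2: "h \<ge> 2" and r: "r > 0"
    and F: "\<forall>l<k. cos ((2*real l+1)*pi/real k) * u0 + sin ((2*real l+1)*pi/real k) * u1 \<le> r * cos (pi / real k)"
  shows "\<exists>w. (\<forall>l<k. 0 \<le> w l) \<and> (\<Sum>l<k. w l) = 1 \<and>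
           u0 = (\<Sum>l<k. w l * (r * cos (2*pi*real l/real k))) \<and>
           u1 = (\<Sum>l<k. w l * (r * sin (2*pi*real l/real k)))"
proof -
  define D where "D = 2*pi/real k"
  have k4: "real k \<ge> 4" using kh h2 by simp
  have hk: "h < k" "0 < k" using kh h2 by auto
  have ang: "\<And>l. 2*pi*real l/real k = real l * D" unfolding D_def by simp
  have hD: "real h * D = pi" unfolding D_def using kh h2 by (simp add: field_simps)
  have Dpos: "0 < D" unfolding D_def using k4 by simp
  have Dle: "D \<le> pi/2" unfolding D_def using k4 by (simp add: field_simps)
  have sD: "sin D > 0" using Dpos Dle by (intro sin_gt_zero) auto
  have cD2: "cos (D/2) > 0" using Dpos Dle by (intro cos_gt_zero) auto
  have D2: "D/2 = pi/real k" unfolding D_def by simp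
  show ?thesis
  proof (cases "u0 = 0 \<and> u1 = 0")
    case True
    define w where "w = (\<lambda>l::nat. ((if l=0 then 0 else 0) + (if l=0 then 0 else 0) + (if l=0 then 1/2 else 0)
            + (if l=h then 1/2 else 0)) :: real)"
    have s1: "(\<Sum>l<k. w l * g l) = g 0 / 2 + g h / 2" for g
      unfolding w_def using wsum[of 0 k 0 h 0 0 "1/2" g] hk by simp
    show ?thesis
      apply (rule exI[of _ w])
      using s1[of "\<lambda>_. 1"] s1[of "\<lambda>l. r * cos (2*pi*real l/real k)"] s1[of "\<lambda>l. r * sin (2*pi*real l/real k)"]
        True hD ang
      by (auto simp: w_def)
  next
    case False
    define \<rho> where "\<rho> = sqrt (u0\<^sup>2 + u1\<^sup>2)"
    have "u0\<^sup>2 + u1\<^sup>2 > 0" using False by (simp add: sum_power2_gt_zero_iff)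
    then have rp: "\<rho> > 0" unfolding \<rho>_def by simp
    have sq: "\<rho>\<^sup>2 = u0\<^sup>2 + u1\<^sup>2" unfolding \<rho>_def by simp
    have "(u0/\<rho>)\<^sup>2 + (u1/\<rho>)\<^sup>2 = (u0\<^sup>2 + u1\<^sup>2) / \<rho>\<^sup>2"
      by (simp add: power_divide add_divide_distrib)
    then have "(u0/\<rho>)\<^sup>2 + (u1/\<rho>)\<^sup>2 = 1" using sq rp False by simp
    then obtain t where t: "0 \<le> t" "t < 2*pi" "u0/\<rho> = cos t" "u1/\<rho> = sin t"
      by (rule sincos_total_2pi)
    have u0: "u0 = \<rho> * cos t" and u1: "u1 = \<rho> * sin t" using t rp by (auto simp: field_simps)
    define m where "m = nat \<lfloor>t / D\<rfloor>"
    have tD0: "0 \<le> t / D" using t Dpos by simp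
    have m1: "real m \<le> t / D" unfolding m_def using tD0 by linarith
    have m2: "t / D < real m + 1" unfolding m_def using tD0 by linarith
    have tk: "t / D < real k" using t Dpos unfolding D_def using k4 by (simp add: field_simps)
    have mk: "m < k" using m1 tk by linarith
    define A where "A = real m * D"
    define B where "B = (real m + 1) * D"
    have At: "A \<le> t" using m1 Dpos unfolding A_def by (simp add: field_simps)
    have tB: "t < B" using m2 Dpos unfolding B_def by (simp add: field_simps)
    have BA: "B - A = D" unfolding A_def B_def by (simp add: algebra_simps)
    define m' where "m' = (if m + 1 = k then 0 else m + 1)"
    have m'k: "m' < k" unfolding m'_def using mk by auto
    have cB: "cos (real m' * D) = cos B" "sin (real m' * D) = sin B"
    proof -
      have "cos (real m' * D) = cos B \<and> sin (real m' * D) = sin B"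
      proof (cases "m + 1 = k")
        case True
        then have "B = 2 * pi" unfolding B_def D_def using k4
          by (simp add: field_simps flip: of_nat_Suc)
        then show ?thesis using True unfolding m'_def by simp
      next
        case False then show ?thesis unfolding m'_def B_def by (simp add: add.commute)
      qed
      then show "cos (real m' * D) = cos B" "sin (real m' * D) = sin B" by auto
    qed
    define a where "a = \<rho> * sin (B - t) / (r * sin D)"
    define b where "b = \<rho> * sin (t - A) / (r * sin D)"
    have a0: "a \<ge> 0" unfolding a_def using rp r sD tB At BA Dle pi_gt_zero
      by (intro divide_nonneg_pos mult_nonneg_nonneg sin_ge_zero) (auto intro: order.strict_implies_order)
    have b0: "b \<ge> 0" unfolding b_def using rp r sD tB At BA Dle pi_gt_zero
      by (intro divide_nonneg_pos mult_nonneg_nonneg sin_ge_zero) auto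
    have id1: "sin (B-t) * cos A + sin (t-A) * cos B = cos t * sin (B - A)"
      by (simp add: sin_diff algebra_simps)
    have id2: "sin (B-t) * sin A + sin (t-A) * sin B = sin t * sin (B - A)"
      by (simp add: sin_diff algebra_simps)
    have e0: "a * (r * cos A) + b * (r * cos B) = u0"
    proof -
      have "a * (r * cos A) + b * (r * cos B) = \<rho> * (sin (B-t) * cos A + sin (t-A) * cos B) / sin D"
        unfolding a_def b_def using r sD by (simp add: field_simps)
      also have "\<dots> = u0" using id1 BA sD u0 by simp
      finally show ?thesis .
    qed
    have e1: "a * (r * sin A) + b * (r * sin B) = u1"
    proof -
      have "a * (r * sin A) + b * (r * sin B) = \<rho> * (sin (B-t) * sin A + sin (t-A) * sin B) / sin D"
        unfolding a_def b_def using r sD by (simp add: field_simps)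
      also have "\<dots> = u1" using id2 BA sD u1 by simp
      finally show ?thesis .
    qed
    define \<psi> where "\<psi> = (2*real m+1)*pi/real k"
    have psi: "\<psi> = (A + B) / 2" unfolding \<psi>_def A_def B_def D_def using k4 by (simp add: field_simps)
    have Fm: "cos \<psi> * u0 + sin \<psi> * u1 \<le> r * cos (pi / real k)"
      using F mk unfolding \<psi>_def by blast
    have "cos \<psi> * u0 + sin \<psi> * u1 = \<rho> * cos (\<psi> - t)" using u0 u1 by (simp add: cos_diff algebra_simps)
    have ss: "sin (B-t) + sin (t-A) = 2 * sin (D/2) * cos (\<psi> - t)"
      by (simp add: sin_plus_sin psi BA[symmetric] algebra_simps add_divide_distrib diff_divide_distrib)
    have sDD: "sin D = 2 * sin (D/2) * cos (D/2)"
      using sin_double[of "D/2"] by simp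
    have sD2: "sin (D/2) > 0" using Dpos Dle by (intro sin_gt_zero) auto
    have "a + b = \<rho> * (sin (B-t) + sin (t-A)) / (r * sin D)"
      unfolding a_def b_def by (simp add: add_divide_distrib algebra_simps)
    also have "\<dots> = \<rho> * cos (\<psi> - t) / (r * cos (D/2))"
      unfolding ss sDD using sD2 cD2 r by (simp add: field_simps)
    also have "\<dots> = (cos \<psi> * u0 + sin \<psi> * u1) / (r * cos (pi / real k))"
      using \<open>cos \<psi> * u0 + sin \<psi> * u1 = \<rho> * cos (\<psi> - t)\<close> D2 by simp
    also have "\<dots> \<le> 1" using Fm r cD2 D2 by (simp add: divide_le_eq_1)
    finally have ab: "a + b \<le> 1" .
    define e where "e = (1 - a - b) / 2"
    define w where "w = (\<lambda>l::nat. ((if l=m then a else 0) + (if l=m' then b else 0) + (if l=0 then e else 0)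
            + (if l=h then e else 0)) :: real)"
    have s1: "(\<Sum>l<k. w l * g l) = a * g m + b * g m' + e * g 0 + e * g h" for g
      unfolding w_def using wsum[of m k m' h a b e g] hk mk m'k by simp
    have w0: "\<forall>l<k. 0 \<le> w l" unfolding w_def e_def using a0 b0 ab by auto
    have c0: "(\<Sum>l<k. w l * (r * cos (2*pi*real l/real k))) = u0"
    proof -
      have "(\<Sum>l<k. w l * (r * cos (2*pi*real l/real k))) = (\<Sum>l<k. w l * (r * cos (real l * D)))"
        by (simp only: ang)
      also have "\<dots> = a * (r * cos (real m * D)) + b * (r * cos (real m' * D)) + e * (r * cos (real 0 * D)) + e * (r * cos (real h * D))"
        by (rule s1)
      also have "\<dots> = u0" using cB hD e0 unfolding A_def by simp
      finally show ?thesis .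
    qed
    have c1: "(\<Sum>l<k. w l * (r * sin (2*pi*real l/real k))) = u1"
    proof -
      have "(\<Sum>l<k. w l * (r * sin (2*pi*real l/real k))) = (\<Sum>l<k. w l * (r * sin (real l * D)))"
        by (simp only: ang)
      also have "\<dots> = a * (r * sin (real m * D)) + b * (r * sin (real m' * D)) + e * (r * sin (real 0 * D)) + e * (r * sin (real h * D))"
        by (rule s1)
      also have "\<dots> = u1" using cB hD e1 unfolding A_def by simp
      finally show ?thesis .
    qed
    have c2: "(\<Sum>l<k. w l) = 1"
      using s1[of "\<lambda>_. 1"] unfolding e_def by simp
    show ?thesis by (rule exI[of _ w]) (use c0 c1 c2 w0 in auto)
  qed
qed



definition gg :: "nat \<Rightarrow> nat" where "gg i = 2^(i+2)"
definition rr :: "nat \<Rightarrow> real" where "rr i = (1 - 1/2^i)/3"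
definition ss :: "nat \<Rightarrow> real" where "ss j = 1/(4*2^j)"
definition nv :: "nat \<Rightarrow> nat \<Rightarrow> real" where "nv j l = (2*real l+1)*pi/real (gg j)"
definition PP :: "nat \<Rightarrow> (nat \<Rightarrow> real) set" where
  "PP i = {(\<lambda>j. \<Sum>l<gg i. w l * pt2 (rr i * cos (2*pi*real l/real (gg i))) (rr i * sin (2*pi*real l/real (gg i))) j)
          | w. (\<forall>l<gg i. w l \<ge> 0) \<and> (\<Sum>l<gg i. w l) = 1}"
definition MM :: "(nat \<Rightarrow> real) set" where
  "MM = {w \<in> vec 3. 1 \<le> w 2 \<and> (\<forall>j\<ge>1. \<forall>l<gg j.
      cos (nv j l) * (w 0 - w 2) + sin (nv j l) * w 1 \<le> rr j * cos (pi / real (gg j)) + ss j * (w 2 - real j))}"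

lemma rr_bounds: "i \<ge> 1 \<Longrightarrow> 0 < rr i \<and> rr i < 1/3"
proof -
  assume "i \<ge> 1"
  then have "(2::real)^i \<ge> 2^1" by (intro power_increasing) auto
  then show ?thesis unfolding rr_def by (simp add: field_simps)
qed

lemma rr_nonneg: "rr i \<ge> 0"
  unfolding rr_def by (simp add: field_simps)

lemma cross:
  assumes "i \<ge> 1" "j \<ge> 1" "i \<noteq> j"
  shows "rr i \<le> rr j * cos (pi / real (gg j)) + ss j * (real i - real j)"
proof -
  define X where "X = (2::real)^j"
  define Y where "Y = (2::real)^i"
  have Xp: "X > 0" "Y > 0" unfolding X_def Y_def by auto
  have cb: "1 - cos (pi / real (gg j)) \<le> 1 / (4 * X)"
    using cc_bound[OF assms(2)] unfolding gg_def X_def by simp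
  have rj: "0 \<le> rr j" "rr j \<le> 1/3" using rr_bounds[OF assms(2)] by auto
  have "rr j * (1 - cos (pi / real (gg j))) \<le> (1/3) * (1 / (4 * X))"
    using cb rj by (intro mult_mono) auto
  then have c1: "rr j * cos (pi / real (gg j)) \<ge> rr j - 1 / (12 * X)" by (simp add: algebra_simps)
  have key: "5 - 3 * (real i - real j) \<le> 4 * X / Y"
  proof (cases "i > j")
    case True
    then obtain k where k: "i = j + k" "k \<ge> 1" by (metis le_add_diff_inverse less_imp_le_nat less_diff_conv2 add_diff_cancel_left' zero_less_diff less_one not_le)
    have "X / Y = 1 / 2^k" unfolding X_def Y_def k by (simp add: power_add)
    have "4 * X / Y \<ge> 0" using Xp by simp
    show ?thesis
    proof (cases "k = 1")
      case True then show ?thesis using \<open>X / Y = 1 / 2^k\<close> k by simp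
    next
      case False then have "k \<ge> 2" using k by auto
      then have "real i - real j \<ge> 2" using k by simp
      then show ?thesis using \<open>4 * X / Y \<ge> 0\<close> by (smt (verit))
    qed
  next
    case False
    then have "j > i" using assms(3) by auto
    then obtain k where k: "j = i + k" "k \<ge> 1" by (metis le_add_diff_inverse less_imp_le_nat zero_less_diff less_one not_le)
    have XY: "X / Y = 2^k" unfolding X_def Y_def k by (simp add: power_add)
    have "(2::real)^k \<ge> real k + 1"
    proof (induction k)
      case 0 then show ?case by simp
    next
      case (Suc k)
      have "(1::real) \<le> 2^k" by simp
      then show ?case using Suc by simp
    qed
    then show ?thesis using XY k by simp
  qed
  have "rr i = rr j + (1/X - 1/Y)/3" unfolding rr_def X_def Y_def by (simp add: field_simps)
  also have "\<dots> \<le> rr j - 1 / (12 * X) + (real i - real j) / (4 * X)"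
  proof -
    have eq: "(1/X - 1/Y)/3 + 1/(12*X) - (real i - real j)/(4*X) = (5 - 3*(real i - real j) - 4*X/Y) / (12*X)"
      using Xp by (simp add: field_simps)
    have "(5 - 3*(real i - real j) - 4*X/Y) / (12*X) \<le> 0"
      using key Xp by (intro divide_nonpos_pos) auto
    then show ?thesis using eq by linarith
  qed
  also have "\<dots> \<le> rr j * cos (pi / real (gg j)) + ss j * (real i - real j)"
  proof -
    have "ss j * (real i - real j) = (real i - real j)/(4*X)" unfolding ss_def X_def by simp
    then show ?thesis using c1 by linarith
  qed
  finally show ?thesis .
qed



lemma pt2_simps [simp]: "pt2 a c 0 = a" "pt2 a c (Suc 0) = c" "n \<ge> 2 \<Longrightarrow> pt2 a c n = 0"
  unfolding pt2_def by auto

lemma gg_ge: "gg i \<ge> 4" unfolding gg_def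
proof -
  have "(2::nat)^2 \<le> 2^(i+2)" by (intro power_increasing) auto
  then show "4 \<le> (2::nat)^(i+2)" by simp
qed

lemma in_PP:
  assumes i: "i \<ge> 1" and u: "u \<in> PP i"
  shows "u \<in> vec 2" "\<bar>u 0\<bar> \<le> rr i"
    "\<And>j l. j \<ge> 1 \<Longrightarrow> l < gg j \<Longrightarrow>
       cos (nv j l) * u 0 + sin (nv j l) * u 1 \<le> rr j * cos (pi / real (gg j)) + ss j * (real i - real j)"
proof -
  let ?k = "gg i"
  define \<phi> where "\<phi> l = 2*pi*real l/real ?k" for l
  obtain w where w: "\<forall>l<?k. w l \<ge> 0" "(\<Sum>l<?k. w l) = 1"
    and ue: "u = (\<lambda>j. \<Sum>l<?k. w l * pt2 (rr i * cos (\<phi> l)) (rr i * sin (\<phi> l)) j)"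
    using u unfolding PP_def \<phi>_def by blast
  have u0: "u 0 = (\<Sum>l<?k. w l * (rr i * cos (\<phi> l)))" by (simp add: ue)
  have u1: "u 1 = (\<Sum>l<?k. w l * (rr i * sin (\<phi> l)))" by (simp add: ue)
  show "u \<in> vec 2" unfolding vec_def ue by auto
  have "\<bar>u 0\<bar> \<le> (\<Sum>l<?k. \<bar>w l * (rr i * cos (\<phi> l))\<bar>)" unfolding u0 by (rule sum_abs)
  also have "\<dots> \<le> (\<Sum>l<?k. w l * rr i)"
  proof (rule sum_mono)
    fix l assume "l \<in> {..<?k}"
    then have "w l \<ge> 0" using w by auto
    moreover have "\<bar>rr i * cos (\<phi> l)\<bar> \<le> rr i" using rr_nonneg[of i]
      by (simp add: abs_mult mult_left_le)
    ultimately show "\<bar>w l * (rr i * cos (\<phi> l))\<bar> \<le> w l * rr i"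
      by (simp add: abs_mult mult_left_mono)
  qed
  also have "\<dots> = rr i" using w by (simp add: sum_distrib_right[symmetric])
  finally show "\<bar>u 0\<bar> \<le> rr i" .
  fix j l assume j: "j \<ge> 1" and l: "l < gg j"
  define R where "R = rr j * cos (pi / real (gg j)) + ss j * (real i - real j)"
  have vert: "rr i * cos (nv j l - \<phi> m) \<le> R" if "m < ?k" for m
  proof (cases "j = i")
    case True
    have "nv j l - \<phi> m = real_of_int (2 * int l + 1 - 2 * int m) * pi / real ?k"
      unfolding nv_def \<phi>_def True using gg_ge[of i] by (simp add: field_simps)
    moreover have "cos (real_of_int (2 * int l + 1 - 2 * int m) * pi / real ?k) \<le> cos (pi / real ?k)"
      using gg_ge[of i] by (intro cos_odd_le) auto
    ultimately have "cos (nv j l - \<phi> m) \<le> cos (pi / real ?k)"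
      by metis
    then show ?thesis unfolding R_def True using rr_nonneg[of i] by (simp add: mult_left_mono)
  next
    case False
    have "rr i * cos (nv j l - \<phi> m) \<le> rr i" using rr_nonneg[of i] by (simp add: mult_left_le)
    also have "\<dots> \<le> R" unfolding R_def using cross[OF i j] False by simp
    finally show ?thesis .
  qed
  have "cos (nv j l) * u 0 + sin (nv j l) * u 1 = (\<Sum>m<?k. w m * (rr i * cos (nv j l - \<phi> m)))"
    unfolding u0 u1 by (simp add: sum_distrib_left sum.distrib[symmetric] cos_diff algebra_simps)
  also have "\<dots> \<le> (\<Sum>m<?k. w m * R)"
    by (rule sum_mono) (use w vert in \<open>auto intro: mult_left_mono\<close>)
  also have "\<dots> = R" using w by (simp add: sum_distrib_right[symmetric])
  finally show "cos (nv j l) * u 0 + sin (nv j l) * u 1 \<le> rr j * cos (pi / real (gg j)) + ss j * (real i - real j)"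
    unfolding R_def .
qed

lemma PP_of_facets:
  assumes i: "i \<ge> 1" and u: "u \<in> vec 2"
    and F: "\<forall>l<gg i. cos (nv i l) * u 0 + sin (nv i l) * u 1 \<le> rr i * cos (pi / real (gg i))"
  shows "u \<in> PP i"
proof -
  have kh: "gg i = 2 * 2^(i+1)" unfolding gg_def by simp
  have h2: "(2::nat)^(i+1) \<ge> 2"
  proof -
    have "(2::nat)^1 \<le> 2^(i+1)" by (intro power_increasing) auto
    then show ?thesis by simp
  qed
  have F': "\<forall>l<gg i. cos ((2*real l+1)*pi/real (gg i)) * u 0 + sin ((2*real l+1)*pi/real (gg i)) * u 1 \<le> rr i * cos (pi / real (gg i))"
    using F unfolding nv_def .
  obtain w where w: "\<forall>l<gg i. 0 \<le> w l" "(\<Sum>l<gg i. w l) = 1"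
    "u 0 = (\<Sum>l<gg i. w l * (rr i * cos (2*pi*real l/real (gg i))))"
    "u 1 = (\<Sum>l<gg i. w l * (rr i * sin (2*pi*real l/real (gg i))))"
    using sector[OF kh h2 _ F'] rr_bounds[OF i] by blast
  have "u = (\<lambda>j. \<Sum>l<gg i. w l * pt2 (rr i * cos (2*pi*real l/real (gg i))) (rr i * sin (2*pi*real l/real (gg i))) j)"
  proof
    fix j
    show "u j = (\<Sum>l<gg i. w l * pt2 (rr i * cos (2*pi*real l/real (gg i))) (rr i * sin (2*pi*real l/real (gg i))) j)"
    proof (cases "j \<ge> 2")
      case True then show ?thesis using u unfolding vec_def by simp
    next
      case False
      then have "j = 0 \<or> j = 1" by auto
      then show ?thesis using w by auto
    qed
  qed
  then show ?thesis unfolding PP_def using w by blast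
qed



lemma cont_coord [continuous_intros]: "continuous_on UNIV (\<lambda>w::nat \<Rightarrow> real. w n)"
  by simp

lemma closed_MM: "closed MM"
proof -
  have "MM = (\<Inter>n\<in>{3..}. {w. w n = 0}) \<inter> {w. 1 \<le> w 2} \<inter>
     (\<Inter>j\<in>{1..}. \<Inter>l\<in>{..<gg j}. {w. cos (nv j l) * (w 0 - w 2) + sin (nv j l) * w 1
        \<le> rr j * cos (pi / real (gg j)) + ss j * (w 2 - real j)})"
    unfolding MM_def vec_def by auto
  also have "closed \<dots>"
    by (intro closed_Int closed_INT ballI closed_Collect_eq closed_Collect_le continuous_intros)
  finally show ?thesis .
qed

lemma convex_MM: "convex_set MM"
  unfolding convex_set_def
proof (intro ballI allI impI)
  fix x y :: "nat \<Rightarrow> real" and u :: real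
  assume x: "x \<in> MM" and y: "y \<in> MM" and u: "0 \<le> u \<and> u \<le> 1"
  define z where "z = (\<lambda>i. u * x i + (1 - u) * y i)"
  have zv: "z \<in> vec 3" using x y unfolding MM_def vec_def z_def by auto
  have z2: "1 \<le> z 2"
  proof -
    have "u * 1 + (1-u) * 1 \<le> u * x 2 + (1 - u) * y 2"
      using x y u unfolding MM_def by (intro add_mono mult_left_mono) auto
    then show ?thesis unfolding z_def by simp
  qed
  have zF: "cos (nv j l) * (z 0 - z 2) + sin (nv j l) * z 1
        \<le> rr j * cos (pi / real (gg j)) + ss j * (z 2 - real j)" if "j \<ge> 1" "l < gg j" for j l
  proof -
    define L where "L w = cos (nv j l) * (w 0 - w 2) + sin (nv j l) * w 1" for w :: "nat \<Rightarrow> real"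
    define R where "R w = rr j * cos (pi / real (gg j)) + ss j * (w 2 - real j)" for w :: "nat \<Rightarrow> real"
    have "L x \<le> R x" "L y \<le> R y" using x y that unfolding MM_def L_def R_def by auto
    then have "u * L x + (1-u) * L y \<le> u * R x + (1-u) * R y"
      using u by (intro add_mono mult_left_mono) auto
    moreover have "L z = u * L x + (1-u) * L y" "R z = u * R x + (1-u) * R y"
      unfolding L_def R_def z_def by (simp_all add: algebra_simps)
    ultimately show ?thesis unfolding L_def R_def by simp
  qed
  have "z \<in> MM" unfolding MM_def using zv z2 zF by simp
  then show "(\<lambda>i. u * x i + (1 - u) * y i) \<in> MM" by (simp only: z_def)
qed

lemma e1_simps [simp]: "e1 0 = 1" "e1 (Suc 0) = 0" "n \<ge> 2 \<Longrightarrow> e1 n = 0"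
  unfolding e1_def by auto

lemma join_simps: "join 2 0 x y z = (\<lambda>i. if i < 2 then x i else z (i - 2))"
  unfolding join_def by auto

lemma PP_nonempty: "\<exists>u. u \<in> PP i"
proof -
  define w where "w = (\<lambda>l::nat. if l = 0 then 1 else (0::real))"
  have "0 < gg i" using gg_ge[of i] by simp
  then have "(\<Sum>l<gg i. w l) = 1" unfolding w_def by simp
  then have "(\<lambda>j. \<Sum>l<gg i. w l * pt2 (rr i * cos (2*pi*real l/real (gg i))) (rr i * sin (2*pi*real l/real (gg i))) j) \<in> PP i"
    unfolding PP_def mem_Collect_eq by (intro exI[of _ w] conjI) (auto simp: w_def)
  then show ?thesis by blast
qed

lemma MM_of_PP:
  assumes i: "i \<ge> 1" and u: "u \<in> PP i"
  shows "(\<lambda>n. if n < 2 then u n + real i * e1 n else if n = 2 then real i else 0) \<in> MM"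
proof -
  have uv: "u \<in> vec 2" by (rule in_PP(1)[OF i u])
  have F: "\<And>j l. j \<ge> 1 \<Longrightarrow> l < gg j \<Longrightarrow>
       cos (nv j l) * u 0 + sin (nv j l) * u 1 \<le> rr j * cos (pi / real (gg j)) + ss j * (real i - real j)"
    by (rule in_PP(3)[OF i u])
  define W where "W = (\<lambda>n. if n < 2 then u n + real i * e1 n else if n = 2 then real i else 0)"
  have W0: "W 0 = u 0 + real i" "W 1 = u 1" "W 2 = real i" unfolding W_def by simp_all
  have Wv: "W \<in> vec 3" unfolding W_def vec_def by simp
  have "W \<in> MM" unfolding MM_def mem_Collect_eq
  proof (intro conjI Wv allI impI)
    show "1 \<le> W 2" using i W0 by simp
    fix j l assume "1 \<le> j" "l < gg j"
    then have "cos (nv j l) * u 0 + sin (nv j l) * u 1 \<le> rr j * cos (pi / real (gg j)) + ss j * (real i - real j)"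
      by (rule F)
    then show "cos (nv j l) * (W 0 - W 2) + sin (nv j l) * W 1 \<le> rr j * cos (pi / real (gg j)) + ss j * (W 2 - real j)"
      using W0 by simp
  qed
  then show ?thesis unfolding W_def .
qed



lemma MM_up:
  assumes w: "w \<in> MM" and tau: "\<tau> \<ge> w 2"
  shows "\<exists>w'\<in>MM. w' 2 = \<tau>"
proof -
  define N where "N = nat \<lceil>\<tau>\<rceil> + 1"
  have w1: "w 2 \<ge> 1" using w unfolding MM_def by simp
  have N1: "N \<ge> 1" unfolding N_def by simp
  have Nt: "real N > \<tau>" unfolding N_def by linarith
  obtain u where u: "u \<in> PP N" using PP_nonempty by blast
  define W where "W = (\<lambda>n. if n < 2 then u n + real N * e1 n else if n = 2 then real N else 0)"
  have W: "W \<in> MM" unfolding W_def by (rule MM_of_PP[OF N1 u])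
  have W2: "W 2 = real N" unfolding W_def by simp
  define lam where "lam = (real N - \<tau>) / (real N - w 2)"
  have l0: "0 \<le> lam" "lam \<le> 1" unfolding lam_def using Nt tau by (auto simp: field_simps)
  have cm: "(\<lambda>i. lam * w i + (1 - lam) * W i) \<in> MM"
    using convex_MM[unfolded convex_set_def, rule_format, OF w W, of lam] l0 by simp
  have eqt: "lam * w 2 + (1 - lam) * W 2 = \<tau>"
  proof -
    have ne: "real N - w 2 \<noteq> 0" using Nt tau by simp
    have h: "lam * (real N - w 2) = real N - \<tau>" unfolding lam_def using ne by simp
    then have h2: "lam * real N - lam * w 2 = real N - \<tau>" by (simp add: algebra_simps)
    have "lam * w 2 + (1 - lam) * W 2 = lam * w 2 + real N - lam * real N" unfolding W2 by (simp add: algebra_simps)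
    then show ?thesis using h2 by linarith
  qed
  show ?thesis by (rule bexI[OF _ cm]) (simp add: eqt)
qed

lemma common_den:
  fixes a :: "nat \<Rightarrow> real" and n :: nat
  assumes "\<forall>i. (a i :: real) \<in> \<rat>"
  shows "\<exists>q::nat. q > 0 \<and> (\<forall>i<n. real q * a i \<in> \<int>)"
proof (induction n)
  case 0 then show ?case by (intro exI[of _ 1]) simp
next
  case (Suc n)
  then obtain q :: nat where q: "q > 0" "\<forall>i<n. real q * a i \<in> \<int>" by blast
  obtain p b where pb: "b > 0" "a n = of_int p / of_int b" using assms Rats_cases' by metis
  define q' where "q' = q * nat b"
  have "q' > 0" unfolding q'_def using q pb by simp
  moreover have "real q' * a i \<in> \<int>" if "i < Suc n" for i
  proof (cases "i < n")
    case True
    have "real q' * a i = real (nat b) * (real q * a i)" unfolding q'_def by simp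
    then show ?thesis using q True by (metis Ints_mult Ints_of_nat)
  next
    case False
    then have "i = n" using that by simp
    have "real q' * a i = real q * of_int p" unfolding q'_def \<open>i = n\<close> pb using pb(1) by simp
    then show ?thesis by (metis Ints_mult Ints_of_nat Ints_of_int)
  qed
  ultimately show ?case by blast
qed

lemma rat_unb: "rationally_unbounded 1 (proj_z 2 0 1 MM)"
  unfolding rationally_unbounded_def Let_def
proof (intro allI impI)
  fix d' :: nat and A :: "nat \<Rightarrow> nat \<Rightarrow> real" and b :: "nat \<Rightarrow> real"
  assume rat: "(\<forall>i j. A i j \<in> \<rat>) \<and> (\<forall>i. b i \<in> \<rat>)"
  define f where "f w = (\<lambda>i. if i < d' then A i 0 * w 2 + b i else 0)" for w :: "nat \<Rightarrow> real"
  have img: "aff_map 1 d' A b ` proj_z 2 0 1 MM = f ` MM"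
    unfolding proj_z_def aff_map_def image_image f_def by (rule image_cong) (auto simp: fun_eq_iff)
  have main: "bounded_set (f ` MM) \<or>
    (\<exists>r\<in>rec_cone d' (f ` MM). (\<exists>i. r i \<noteq> 0) \<and> (\<forall>i. r i \<in> \<int>))"
  proof (cases "\<forall>i<d'. A i 0 = 0")
    case True
    have "bounded_set (f ` MM)"
      unfolding bounded_set_def
    proof (intro exI[of _ "\<Sum>i<d'. \<bar>b i\<bar>"] ballI allI)
      fix x i assume "x \<in> f ` MM"
      then obtain w where "x = f w" by blast
      show "\<bar>x i\<bar> \<le> (\<Sum>i<d'. \<bar>b i\<bar>)"
      proof (cases "i < d'")
        case True
        then have "\<bar>x i\<bar> = \<bar>b i\<bar>" using \<open>x = f w\<close> \<open>\<forall>i<d'. A i 0 = 0\<close> unfolding f_def by simp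
        also have "\<dots> \<le> (\<Sum>i<d'. \<bar>b i\<bar>)" using True by (intro member_le_sum) auto
        finally show ?thesis .
      next
        case False
        then show ?thesis using \<open>x = f w\<close> unfolding f_def by (simp add: sum_nonneg)
      qed
    qed
    then show ?thesis by blast
  next
    case False
    then obtain i0 where i0: "i0 < d'" "A i0 0 \<noteq> 0" by blast
    obtain q :: nat where q: "q > 0" "\<forall>i<d'. real q * A i 0 \<in> \<int>"
      using common_den[of "\<lambda>i. A i 0" d'] rat by blast
    define r where "r = (\<lambda>i. if i < d' then real q * A i 0 else 0)"
    have rv: "r \<in> vec d'" unfolding r_def vec_def by simp
    have rc: "r \<in> rec_cone d' (f ` MM)"
      unfolding rec_cone_def mem_Collect_eq
    proof (intro conjI rv ballI allI impI)
      fix x t assume x: "x \<in> f ` MM" and t: "0 \<le> (t::real)"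
      then obtain w where w: "w \<in> MM" "x = f w" by blast
      obtain w' where w': "w' \<in> MM" "w' 2 = w 2 + t * real q"
        using MM_up[OF w(1), of "w 2 + t * real q"] t by auto
      have "(\<lambda>i. x i + t * r i) = f w'"
        unfolding w(2) f_def r_def w'(2) by (auto simp: algebra_simps)
      then show "(\<lambda>i. x i + t * r i) \<in> f ` MM" using w' by auto
    qed
    have "r i0 \<noteq> 0" unfolding r_def using i0 q by simp
    moreover have "\<forall>i. r i \<in> \<int>" unfolding r_def using q by auto
    ultimately show ?thesis using rc by blast
  qed
  show "bounded_set (aff_map 1 d' A b ` proj_z 2 0 1 MM) \<or>
    (\<exists>r\<in>rec_cone d' (aff_map 1 d' A b ` proj_z 2 0 1 MM). (\<exists>i. r i \<noteq> 0) \<and> (\<forall>i. r i \<in> \<int>))"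
    unfolding img by (rule main)
qed



lemma translate_mem: "x \<in> translate (\<lambda>j. real i * e1 j) P \<longleftrightarrow> (\<exists>u\<in>P. x = (\<lambda>j. u j + real i * e1 j))"
  unfolding translate_def by auto

lemma repr_equiv:
  assumes x: "x \<in> vec 2"
  shows "x \<in> (\<Union>i\<in>{1..}. translate (\<lambda>j. real i * e1 j) (PP i)) \<longleftrightarrow>
    (\<exists>y\<in>vec 0. \<exists>z\<in>vec 1. (\<forall>i<1. z i \<in> \<int>) \<and> join 2 0 x y z \<in> MM)"
proof
  assume "x \<in> (\<Union>i\<in>{1..}. translate (\<lambda>j. real i * e1 j) (PP i))"
  then obtain i u where i: "i \<ge> 1" and u: "u \<in> PP i" and xu: "x = (\<lambda>j. u j + real i * e1 j)"
    by (auto simp: translate_def)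
  define z where "z = (\<lambda>n::nat. if n = 0 then real i else 0)"
  have zv: "z \<in> vec 1" unfolding z_def vec_def by simp
  have zi: "\<forall>n<1. z n \<in> \<int>" unfolding z_def by simp
  have yv: "(\<lambda>_. 0) \<in> vec 0" unfolding vec_def by simp
  have "join 2 0 x (\<lambda>_. 0) z = (\<lambda>n. if n < 2 then u n + real i * e1 n else if n = 2 then real i else 0)"
    unfolding join_simps xu z_def by (auto simp: fun_eq_iff)
  then have "join 2 0 x (\<lambda>_. 0) z \<in> MM" using MM_of_PP[OF i u] by simp
  then show "\<exists>y\<in>vec 0. \<exists>z\<in>vec 1. (\<forall>i<1. z i \<in> \<int>) \<and> join 2 0 x y z \<in> MM"
    using zv zi yv by blast
next
  assume "\<exists>y\<in>vec 0. \<exists>z\<in>vec 1. (\<forall>i<1. z i \<in> \<int>) \<and> join 2 0 x y z \<in> MM"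
  then obtain y z where z: "z 0 \<in> \<int>" and J: "join 2 0 x y z \<in> MM" by auto
  define J where "J = join 2 0 x y z"
  have J0: "J 0 = x 0" "J 1 = x 1" "J 2 = z 0" unfolding J_def join_simps by simp_all
  have "1 \<le> J 2" using J unfolding MM_def J_def[symmetric] by simp
  then have z1: "z 0 \<ge> 1" using J0 by simp
  obtain k where k: "z 0 = of_int k" using z Ints_cases by blast
  define i where "i = nat k"
  have ki: "k \<ge> 1" using z1 k by simp
  have zi: "z 0 = real i" unfolding i_def using k ki by simp
  have i: "i \<ge> 1" unfolding i_def using ki by simp
  define u where "u = (\<lambda>n. x n - real i * e1 n)"
  have uv: "u \<in> vec 2" using x unfolding u_def vec_def by auto
  have F: "\<forall>l<gg i. cos (nv i l) * u 0 + sin (nv i l) * u 1 \<le> rr i * cos (pi / real (gg i))"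
  proof (intro allI impI)
    fix l assume l: "l < gg i"
    have "cos (nv i l) * (J 0 - J 2) + sin (nv i l) * J 1 \<le> rr i * cos (pi / real (gg i)) + ss i * (J 2 - real i)"
      using J i l unfolding MM_def J_def[symmetric] by blast
    then show "cos (nv i l) * u 0 + sin (nv i l) * u 1 \<le> rr i * cos (pi / real (gg i))"
      unfolding J0 zi u_def by simp
  qed
  have "u \<in> PP i" by (rule PP_of_facets[OF i uv F])
  moreover have "x = (\<lambda>j. u j + real i * e1 j)" unfolding u_def by simp
  ultimately have "x \<in> translate (\<lambda>j. real i * e1 j) (PP i)"
    unfolding translate_def by (intro image_eqI[where x=u]) simp_all
  then show "x \<in> (\<Union>i\<in>{1..}. translate (\<lambda>j. real i * e1 j) (PP i))"
    using i by blast
qed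

lemma S_vec: "(\<Union>i\<in>{1..}. translate (\<lambda>j. real i * e1 j) (PP i)) \<subseteq> vec 2"
proof
  fix x assume "x \<in> (\<Union>i\<in>{1..}. translate (\<lambda>j. real i * e1 j) (PP i))"
  then obtain i u where i: "i \<ge> 1" and u: "u \<in> PP i" and xu: "x = (\<lambda>j. u j + real i * e1 j)"
    by (auto simp: translate_def)
  have "u \<in> vec 2" by (rule in_PP(1)[OF i u])
  then show "x \<in> vec 2" unfolding xu vec_def by auto
qed

lemma reg_PP:
  assumes i: "i \<ge> 1"
  shows "regular_polygon (gg i) (PP i)"
proof -
  have g3: "gg i \<ge> 3" using gg_ge[of i] by simp
  have rp: "rr i > 0" using rr_bounds[OF i] by blast
  have eq: "PP i = {(\<lambda>j. \<Sum>l<gg i. w l * (pt2 (0 + rr i * cos (0 + 2 * pi * real l / real (gg i)))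
                          (0 + rr i * sin (0 + 2 * pi * real l / real (gg i)))) j) | w. (\<forall>l<gg i. w l \<ge> 0) \<and> (\<Sum>l<gg i. w l) = 1}"
    unfolding PP_def by simp
  show ?thesis
    unfolding regular_polygon_def Let_def
    by (intro conjI g3 exI[of _ 0] exI[of _ "rr i"] rp eq)
qed

lemma MM_vec: "MM \<subseteq> vec (2 + 0 + 1)"
  unfolding MM_def by auto

lemma disj:
  assumes i: "i \<ge> 1" and j: "j \<ge> 1" and ij: "i \<noteq> j"
  shows "translate (\<lambda>k. real i * e1 k) (PP i) \<inter> translate (\<lambda>k. real j * e1 k) (PP j) = {}"
proof (rule ccontr)
  assume "translate (\<lambda>k. real i * e1 k) (PP i) \<inter> translate (\<lambda>k. real j * e1 k) (PP j) \<noteq> {}"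
  then obtain x where xi: "x \<in> translate (\<lambda>k. real i * e1 k) (PP i)" and xj: "x \<in> translate (\<lambda>k. real j * e1 k) (PP j)"
    by blast
  obtain u where u: "u \<in> PP i" "x = (\<lambda>k. u k + real i * e1 k)" using xi by (auto simp: translate_def)
  obtain v where v: "v \<in> PP j" "x = (\<lambda>k. v k + real j * e1 k)" using xj by (auto simp: translate_def)
  have "x 0 = u 0 + real i" using u(2) by simp
  moreover have "x 0 = v 0 + real j" using v(2) by simp
  moreover have "\<bar>u 0\<bar> \<le> rr i" "\<bar>v 0\<bar> \<le> rr j" using in_PP(2)[OF i u(1)] in_PP(2)[OF j v(1)] by auto
  moreover have "rr i < 1/3" "rr j < 1/3" using rr_bounds[OF i] rr_bounds[OF j] by auto
  ultimately have "\<bar>real i - real j\<bar> < 1" by linarith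
  then show False using ij by linarith
qed

theorem corollary1:
  shows "\<exists>(g :: nat \<Rightarrow> nat) (P :: nat \<Rightarrow> (nat \<Rightarrow> real) set).
     strict_mono_on {1..} g \<and> (\<forall>i\<ge>1. g i \<ge> 1) \<and>
     (\<forall>i\<ge>1. regular_polygon (g i) (P i)) \<and>
     rational_MICP_representable 2
        (\<Union>i\<in>{1..}. translate (\<lambda>j. real i * e1 j) (P i)) \<and>
     (\<forall>i\<ge>1. \<forall>j\<ge>1. i \<noteq> j \<longrightarrow>
        translate (\<lambda>k. real i * e1 k) (P i) \<inter> translate (\<lambda>k. real j * e1 k) (P j) = {})"
proof (intro exI[of _ gg] exI[of _ PP] conjI allI impI)
  show "strict_mono_on {1..} gg"
    unfolding strict_mono_on_def gg_def by (auto intro: power_strict_increasing)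
  show "\<And>i. 1 \<le> i \<Longrightarrow> 1 \<le> gg i" using gg_ge by (metis dual_order.trans one_le_numeral)
  show "\<And>i. 1 \<le> i \<Longrightarrow> regular_polygon (gg i) (PP i)" by (rule reg_PP)
  show "\<And>i j. 1 \<le> i \<Longrightarrow> 1 \<le> j \<Longrightarrow> i \<noteq> j \<Longrightarrow>
     translate (\<lambda>k. real i * e1 k) (PP i) \<inter> translate (\<lambda>k. real j * e1 k) (PP j) = {}"
    by (rule disj)
  have rep: "MICP_repr_by 2 0 1 MM (\<Union>i\<in>{1..}. translate (\<lambda>j. real i * e1 j) (PP i))"
    unfolding MICP_repr_by_def by (intro conjI MM_vec closed_MM convex_MM ballI repr_equiv)
  show "rational_MICP_representable 2 (\<Union>i\<in>{1..}. translate (\<lambda>j. real i * e1 j) (PP i))"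
    unfolding rational_MICP_representable_def
    by (intro conjI S_vec exI[of _ 0] exI[of _ 1] exI[of _ MM] rep rat_unb)
qed

end
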